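(* Let $S$ be the set obtained after $i-1$ iterations of BLITS (calling the SIEVE subroutine), and let $O \in \arg\max_{|S'|\le k} f(S')$. Then $\mathbb{E}[f(O\cup S)] \ge (1-1/r)^{i-1}\,\texttt{OPT}$.
   Context: $N$ is a ground set with $|N|=n$, $f:2^N\to\mathbb{R}_{\ge0}$ is non-negative submodular (not necessarily monotone), $k$ is a cardinality constraint, $\texttt{OPT}=\max_{|S|\le k} f(S)$. $f_S(T) = f(S\cup T)-f(S)$, $f_S(a) = f_S(\{a\})$. A dummy element $a$ satisfies $f_S(a)=0$ for all $S$. $\mathcal{U}(X)$ is the uniform distribution over subsets of $X$ of size exactly $k/r$, and $\Delta(a,S,X) := \mathbb{E}_{R\sim\mathcal{U}(X)}[f_{S\cup(R\setminus\{a\})}(a)]$. SIEVE$(S,k,i,r)$ (idealized, with parameter $\epsilon>0$, exact $\texttt{OPT}$ and exact expectations): $X\leftarrow N$, $t \leftarrow \frac{1-\epsilon/2}{2}((1-1/r)^{i-1}(1-\epsilon/2)\texttt{OPT} - f(S))$; while $|X|>k$: $X^+\leftarrow\{a\in X:\Delta(a,S,X)\ge0\}$; if $\mathbb{E}_{R\sim\mathcal{U}(X)}[f_S(R\cap X^+)]\ge t/r$ return $R\cap X^+$ with $R\sim\mathcal{U}(X)$; else $X\leftarrow\{a\in X:\Delta(a,S,X)\ge(1+\epsilon/4)t/k\}$. After the loop: add $k-|X|$ dummy elements to $X$, set $X^+\leftarrow\{a\in X:\Delta(a,S,X)\ge0\}$, return $R\cap X^+$ with $R\sim\mathcal{U}(X)$.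 BLITS with parameter $r$: $S\leftarrow\emptyset$; for $i=1,\dots,r$, $S\leftarrow S\cup$ SIEVE$(S,k,i,r)$; return $S$. *)

theory Defs
  imports "HOL-Probability.SPMF" "HOL-Library.While_Combinator"
begin

text \<open>Elements handled by the algorithm: real elements Inl a (a in N) and dummy
  elements Inr j. The function is extended to such sets by ignoring dummies,
  so that every dummy element d satisfies F(S + d) - F S = 0 for all S.\<close>

definition ext_f :: "('a set \<Rightarrow> real) \<Rightarrow> ('a + nat) set \<Rightarrow> real" where
  "ext_f f T = f (Inl -` T)"

definition submodular_on :: "'a set \<Rightarrow> ('a set \<Rightarrow> real) \<Rightarrow> bool" where
  "submodular_on N f \<longleftrightarrow> (\<forall>A B. A \<subseteq> N \<longrightarrow> B \<subseteq> N \<longrightarrow> f (A \<union> B) + f (A \<inter> B) \<le> f A + f B)"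

definition nonneg_on :: "'a set \<Rightarrow> ('a set \<Rightarrow> real) \<Rightarrow> bool" where
  "nonneg_on N f \<longleftrightarrow> (\<forall>A. A \<subseteq> N \<longrightarrow> 0 \<le> f A)"

definition OPT :: "'a set \<Rightarrow> ('a set \<Rightarrow> real) \<Rightarrow> nat \<Rightarrow> real" where
  "OPT N f k = Max (f ` {S. S \<subseteq> N \<and> card S \<le> k})"

definition Unif :: "nat \<Rightarrow> nat \<Rightarrow> 'b set \<Rightarrow> 'b set pmf" where
  "Unif k r X = pmf_of_set {R. R \<subseteq> X \<and> card R = k div r}"

definition Delta :: "('a set \<Rightarrow> real) \<Rightarrow> nat \<Rightarrow> nat \<Rightarrow> ('a + nat)
    \<Rightarrow> ('a + nat) set \<Rightarrow> ('a + nat) set \<Rightarrow> real" where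
  "Delta f k r a S X = measure_pmf.expectation (Unif k r X)
     (\<lambda>R. ext_f f (S \<union> (R - {a}) \<union> {a}) - ext_f f (S \<union> (R - {a})))"

definition Xplus :: "('a set \<Rightarrow> real) \<Rightarrow> nat \<Rightarrow> nat \<Rightarrow> ('a + nat) set
    \<Rightarrow> ('a + nat) set \<Rightarrow> ('a + nat) set" where
  "Xplus f k r S X = {a \<in> X. Delta f k r a S X \<ge> 0}"

definition sieve_t :: "'a set \<Rightarrow> ('a set \<Rightarrow> real) \<Rightarrow> nat \<Rightarrow> nat \<Rightarrow> real \<Rightarrow> nat
    \<Rightarrow> ('a + nat) set \<Rightarrow> real" where
  "sieve_t N f k r eps i S = (1 - eps / 2) / 2 *
     ((1 - 1 / real r) ^ (i - 1) * (1 - eps / 2) * OPT N f k - ext_f f S)"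

definition sieve_cond :: "'a set \<Rightarrow> ('a set \<Rightarrow> real) \<Rightarrow> nat \<Rightarrow> nat \<Rightarrow> real \<Rightarrow> nat
    \<Rightarrow> ('a + nat) set \<Rightarrow> ('a + nat) set \<Rightarrow> bool" where
  "sieve_cond N f k r eps i S X \<longleftrightarrow>
     measure_pmf.expectation (Unif k r X)
       (\<lambda>R. ext_f f (S \<union> (R \<inter> Xplus f k r S X)) - ext_f f S)
     \<ge> sieve_t N f k r eps i S / real r"

definition sieve_filter :: "'a set \<Rightarrow> ('a set \<Rightarrow> real) \<Rightarrow> nat \<Rightarrow> nat \<Rightarrow> real \<Rightarrow> nat
    \<Rightarrow> ('a + nat) set \<Rightarrow> ('a + nat) set \<Rightarrow> ('a + nat) set" where
  "sieve_filter N f k r eps i S X =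
     {a \<in> X. Delta f k r a S X \<ge> (1 + eps / 4) * sieve_t N f k r eps i S / real k}"

text \<open>The deterministic while loop of SIEVE on X (None = the loop does not terminate).
  It exits either with |X| \<le> k or with the if-test true (and |X| > k).\<close>
definition sieve_loop :: "'a set \<Rightarrow> ('a set \<Rightarrow> real) \<Rightarrow> nat \<Rightarrow> nat \<Rightarrow> real \<Rightarrow> nat
    \<Rightarrow> ('a + nat) set \<Rightarrow> ('a + nat) set option" where
  "sieve_loop N f k r eps i S =
     while_option (\<lambda>X. card X > k \<and> \<not> sieve_cond N f k r eps i S X)
                  (sieve_filter N f k r eps i S) (Inl ` N)"

definition sieve_return :: "('a set \<Rightarrow> real) \<Rightarrow> nat \<Rightarrow> nat
    \<Rightarrow> ('a + nat) set \<Rightarrow> ('a + nat) set \<Rightarrow> ('a + nat) set spmf" where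
  "sieve_return f k r S X = spmf_of_pmf (map_pmf (\<lambda>R. R \<inter> Xplus f k r S X) (Unif k r X))"

definition SIEVE :: "'a set \<Rightarrow> ('a set \<Rightarrow> real) \<Rightarrow> nat \<Rightarrow> nat \<Rightarrow> real \<Rightarrow> nat
    \<Rightarrow> ('a + nat) set \<Rightarrow> ('a + nat) set spmf" where
  "SIEVE N f k r eps i S =
     (case sieve_loop N f k r eps i S of
        None \<Rightarrow> return_pmf None
      | Some X \<Rightarrow>
          if card X > k then sieve_return f k r S X
          else sieve_return f k r S (X \<union> Inr ` {0..<k - card X}))"

text \<open>The set S after m iterations of BLITS (the (m+1)-th iteration calls SIEVE(S,k,m+1,r)).\<close>
fun BLITS_iter :: "'a set \<Rightarrow> ('a set \<Rightarrow> real) \<Rightarrow> nat \<Rightarrow> nat \<Rightarrow> real \<Rightarrow> nat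
    \<Rightarrow> ('a + nat) set spmf" where
  "BLITS_iter N f k r eps 0 = return_spmf {}"
| "BLITS_iter N f k r eps (Suc m) =
     bind_spmf (BLITS_iter N f k r eps m)
       (\<lambda>S. map_spmf (\<lambda>T. S \<union> T) (SIEVE N f k r eps (Suc m) S))"

end

theory Submission
  imports Defs
begin

lemma subm_step:
  fixes h :: "'b set \<Rightarrow> real"
  assumes fin: "finite X"
    and sub: "\<forall>A B. A \<subseteq> X \<longrightarrow> B \<subseteq> X \<longrightarrow> h (A \<union> B) + h (A \<inter> B) \<le> h A + h B"
    and R: "R \<subseteq> X" and B: "B \<subseteq> X - R"
  shows "(\<Sum>a\<in>B. h (insert a R) - h R) \<ge> h (R \<union> B) - h R"
proof -
  have "finite B" using fin B by (meson finite_Diff finite_subset)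
  then show ?thesis using B
  proof (induction B rule: finite_induct)
    case empty show ?case by simp
  next
    case (insert b B)
    have bX: "insert b R \<subseteq> X" "R \<union> B \<subseteq> X" using insert.prems R by auto
    have "h (insert b R \<union> (R \<union> B)) + h (insert b R \<inter> (R \<union> B)) \<le> h (insert b R) + h (R \<union> B)"
      using sub bX by blast
    moreover have "insert b R \<union> (R \<union> B) = R \<union> insert b B" by auto
    moreover have "insert b R \<inter> (R \<union> B) = R" using insert.prems insert.hyps by auto
    ultimately have "h (R \<union> insert b B) - h (R \<union> B) \<le> h (insert b R) - h R" by simp
    moreover have "(\<Sum>a\<in>B. h (insert a R) - h R) \<ge> h (R \<union> B) - h R" using insert by auto
    ultimately show ?case using insert.hyps by simp
  qed
qed

lemma double_count:
  fixes h :: "'b set \<Rightarrow> real"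
  assumes fin: "finite X"
  shows "(\<Sum>R\<in>{R. R \<subseteq> X \<and> card R = s}. \<Sum>a\<in>X - R. h (insert a R))
       = real (Suc s) * (\<Sum>R\<in>{R. R \<subseteq> X \<and> card R = Suc s}. h R)"
proof -
  let ?P = "\<lambda>s. {R. R \<subseteq> X \<and> card R = s}"
  have finP: "finite (?P s')" for s' using fin by (simp add: finite_Collect_subsets)
  have "(\<Sum>R\<in>?P s. \<Sum>a\<in>X - R. h (insert a R)) = (\<Sum>(R,a)\<in>Sigma (?P s) (\<lambda>R. X - R). h (insert a R))"
    by (rule sum.Sigma) (use finP fin in auto)
  also have "\<dots> = (\<Sum>(R,a)\<in>Sigma (?P (Suc s)) (\<lambda>R. R). h R)"
  proof (rule sum.reindex_bij_witness[where j = "\<lambda>(R,a). (insert a R, a)" and i = "\<lambda>(R,a). (R - {a}, a)"])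
    fix p assume "p \<in> Sigma (?P s) (\<lambda>R. X - R)"
    then show "(\<lambda>(R,a). (R - {a}, a)) ((\<lambda>(R,a). (insert a R, a)) p) = p" by auto
  next
    fix p assume p: "p \<in> Sigma (?P s) (\<lambda>R. X - R)"
    then obtain R a where pa: "p = (R,a)" "R \<subseteq> X" "card R = s" "a \<in> X" "a \<notin> R" by auto
    have "finite R" using pa fin finite_subset by blast
    then show "(\<lambda>(R,a). (insert a R, a)) p \<in> Sigma (?P (Suc s)) (\<lambda>R. R)" using pa by auto
  next
    fix p assume "p \<in> Sigma (?P (Suc s)) (\<lambda>R. R)"
    then show "(\<lambda>(R,a). (insert a R, a)) ((\<lambda>(R,a). (R - {a}, a)) p) = p" by auto
  next
    fix p assume p: "p \<in> Sigma (?P (Suc s)) (\<lambda>R. R)"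
    then obtain R a where pa: "p = (R,a)" "R \<subseteq> X" "card R = Suc s" "a \<in> R" by auto
    then show "(\<lambda>(R,a). (R - {a}, a)) p \<in> Sigma (?P s) (\<lambda>R. X - R)" by auto
  next
    fix p assume "p \<in> Sigma (?P s) (\<lambda>R. X - R)"
    then show "(\<lambda>(R,a). h R) ((\<lambda>(R,a). (insert a R, a)) p) = (\<lambda>(R,a). h (insert a R)) p" by auto
  qed
  also have "\<dots> = (\<Sum>R\<in>?P (Suc s). \<Sum>a\<in>R. h R)"
    by (rule sum.Sigma[symmetric]) (use finP fin finite_subset in auto)
  also have "\<dots> = (\<Sum>R\<in>?P (Suc s). real (Suc s) * h R)"
    by (rule sum.cong) auto
  finally show ?thesis by (simp add: sum_distrib_left)
qed

lemma unif_bound: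
  fixes h :: "'b set \<Rightarrow> real"
  assumes fin: "finite X"
    and nn: "\<forall>A. A \<subseteq> X \<longrightarrow> 0 \<le> h A"
    and sub: "\<forall>A B. A \<subseteq> X \<longrightarrow> B \<subseteq> X \<longrightarrow> h (A \<union> B) + h (A \<inter> B) \<le> h A + h B"
  shows "s \<le> card X \<Longrightarrow> real (card X) * (\<Sum>R\<in>{R. R \<subseteq> X \<and> card R = s}. h R)
           \<ge> (real (card X) - real s) * real (card X choose s) * h {}"
proof (induction s)
  case 0
  have "{R. R \<subseteq> X \<and> card R = 0} = {{}}" using fin finite_subset by fastforce
  then show ?case by simp
next
  case (Suc s)
  let ?m = "card X"
  let ?P = "\<lambda>s. {R. R \<subseteq> X \<and> card R = s}"
  have IH: "real ?m * sum h (?P s) \<ge> (real ?m - real s) * real (?m choose s) * h {}"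
    using Suc by simp
  have each: "(\<Sum>a\<in>X - R. h (insert a R)) \<ge> (real ?m - real s - 1) * h R" if R: "R \<in> ?P s" for R
  proof -
    have RX: "R \<subseteq> X" "card R = s" using R by auto
    have "(\<Sum>a\<in>X - R. h (insert a R) - h R) \<ge> h (R \<union> (X - R)) - h R"
      by (rule subm_step[OF fin sub RX(1)]) auto
    moreover have "R \<union> (X - R) = X" using RX by auto
    moreover have "h X \<ge> 0" using nn by auto
    moreover have "card (X - R) = ?m - s" using RX fin by (simp add: card_Diff_subset finite_subset)
    moreover have "s \<le> ?m" using Suc by simp
    ultimately show ?thesis by (simp add: sum_subtractf algebra_simps of_nat_diff)
  qed
  have key: "real (Suc s) * sum h (?P (Suc s)) \<ge> (real ?m - real s - 1) * sum h (?P s)"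
  proof -
    have "(real ?m - real s - 1) * sum h (?P s) = (\<Sum>R\<in>?P s. (real ?m - real s - 1) * h R)"
      by (simp add: sum_distrib_left)
    also have "\<dots> \<le> (\<Sum>R\<in>?P s. \<Sum>a\<in>X - R. h (insert a R))"
      by (rule sum_mono) (rule each)
    also have "\<dots> = real (Suc s) * sum h (?P (Suc s))" by (rule double_count[OF fin])
    finally show ?thesis .
  qed
  have binom: "real (?m choose Suc s) * real (Suc s) = real (?m choose s) * (real ?m - real s)"
  proof -
    have "(?m choose Suc s) * Suc s = (?m choose s) * (?m - s)"
    proof (cases ?m)
      case 0 then show ?thesis by simp
    next
      case (Suc n)
      have "(Suc n choose Suc s) * Suc s = Suc n * (n choose s)"
        using Suc_times_binomial_eq[of n s] by simp
      also have "\<dots> = (Suc n - s) * (Suc n choose s)"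
        using binomial_absorb_comp[of "Suc n" s] by simp
      finally show ?thesis using Suc by (simp add: mult.commute)
    qed
    then show ?thesis using Suc.prems
      by (metis of_nat_diff of_nat_mult Suc_leD)
  qed
  have h0: "h {} \<ge> 0" using nn by auto
  have c0: "real ?m - real s - 1 \<ge> 0" using Suc.prems by simp
  have "real (Suc s) * (real ?m * sum h (?P (Suc s))) \<ge> real ?m * ((real ?m - real s - 1) * sum h (?P s))"
  proof -
    have "real ?m * ((real ?m - real s - 1) * sum h (?P s)) \<le> real ?m * (real (Suc s) * sum h (?P (Suc s)))"
      using key by (rule mult_left_mono) simp
    then show ?thesis by (simp only: mult.assoc mult.left_commute)
  qed
  also have "real ?m * ((real ?m - real s - 1) * sum h (?P s)) = (real ?m - real s - 1) * (real ?m * sum h (?P s))"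
    by simp
  also have "\<dots> \<ge> (real ?m - real s - 1) * ((real ?m - real s) * real (?m choose s) * h {})"
    using IH c0 by (rule mult_left_mono)
  also have "(real ?m - real s - 1) * ((real ?m - real s) * real (?m choose s) * h {})
     = (real ?m - real s - 1) * h {} * ((real ?m - real s) * real (?m choose s))"
    by (simp add: algebra_simps)
  also have "\<dots> = (real ?m - real s - 1) * h {} * (real (?m choose Suc s) * real (Suc s))"
    using binom by (simp add: mult.commute)
  also have "\<dots> = real (Suc s) * ((real ?m - real (Suc s)) * real (?m choose Suc s) * h {})"
    by (simp add: algebra_simps)
  finally have "real (Suc s) * (real ?m * sum h (?P (Suc s))) \<ge> real (Suc s) * ((real ?m - real (Suc s)) * real (?m choose Suc s) * h {})" .
  then show ?case by (simp only: mult_le_cancel_left_pos of_nat_0_less_iff zero_less_Suc)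
qed


lemma loop_sub:
  assumes "sieve_loop N f k r eps i S = Some X"
  shows "X \<subseteq> Inl ` N"
proof -
  have w: "while_option (\<lambda>X. card X > k \<and> \<not> sieve_cond N f k r eps i S X)
                  (sieve_filter N f k r eps i S) (Inl ` N) = Some X"
    using assms unfolding sieve_loop_def .
  show ?thesis
    by (rule while_option_rule[where P = "\<lambda>X. X \<subseteq> Inl ` N", OF _ w]) (auto simp: sieve_filter_def)
qed

lemma sieve_shape:
  assumes finN: "finite N" and loop: "sieve_loop N f k r eps i S = Some X"
  obtains X' where "SIEVE N f k r eps i S = sieve_return f k r S X'" "finite X'" "k \<le> card X'"
    "Inl -` X' \<subseteq> N"
proof -
  have XN: "X \<subseteq> Inl ` N" by (rule loop_sub[OF loop])
  have finX: "finite X" using XN finN finite_subset by blast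
  define X' where "X' = (if card X > k then X else X \<union> Inr ` {0..<k - card X})"
  have 1: "SIEVE N f k r eps i S = sieve_return f k r S X'"
    by (simp add: SIEVE_def loop X'_def)
  have 2: "finite X'" using finX by (simp add: X'_def)
  have 3: "k \<le> card X'"
  proof (cases "card X > k")
    case True then show ?thesis by (simp add: X'_def)
  next
    case False
    have "X \<inter> Inr ` {0..<k - card X} = {}" using XN by auto
    then have "card X' = card X + card (Inr ` {0..<k - card X} :: ('a + nat) set)"
      using False finX by (simp add: X'_def card_Un_disjoint)
    also have "card (Inr ` {0..<k - card X} :: ('a + nat) set) = k - card X"
      by (simp add: card_image)
    finally show ?thesis using False by simp
  qed
  have 4: "Inl -` X' \<subseteq> N" using XN by (auto simp: X'_def)
  show ?thesis using 1 2 3 4 by (rule that)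
qed

lemma unif_facts:
  assumes "finite X" "k \<le> card X"
  shows "finite {R. R \<subseteq> X \<and> card R = k div r}" "{R. R \<subseteq> X \<and> card R = k div r} \<noteq> {}"
    "set_pmf (Unif k r X) = {R. R \<subseteq> X \<and> card R = k div r}"
proof -
  show f: "finite {R. R \<subseteq> X \<and> card R = k div r}" using assms by (simp add: finite_Collect_subsets)
  have "k div r \<le> card X" using assms div_le_dividend le_trans by blast
  then obtain T where "T \<subseteq> X" "card T = k div r" by (metis obtain_subset_with_card_n)
  then show ne: "{R. R \<subseteq> X \<and> card R = k div r} \<noteq> {}" by auto
  show "set_pmf (Unif k r X) = {R. R \<subseteq> X \<and> card R = k div r}"
    using f ne by (simp add: Unif_def)
qed

lemma sieve_support:
  assumes finN: "finite N" and T: "T \<in> set_spmf (SIEVE N f k r eps i S)"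
  shows "Inl -` T \<subseteq> N"
proof (cases "sieve_loop N f k r eps i S")
  case None
  then show ?thesis using T by (simp add: SIEVE_def)
next
  case (Some X)
  obtain X' where X': "SIEVE N f k r eps i S = sieve_return f k r S X'" "finite X'" "k \<le> card X'"
    "Inl -` X' \<subseteq> N" using sieve_shape[OF finN Some] by blast
  from T obtain R where "R \<in> set_pmf (Unif k r X')" "T = R \<inter> Xplus f k r S X'"
    by (auto simp: X'(1) sieve_return_def)
  then show ?thesis using unif_facts(3)[OF X'(2,3)] X'(4) by blast
qed

lemma blits_support:
  assumes finN: "finite N"
  shows "S \<in> set_spmf (BLITS_iter N f k r eps m) \<Longrightarrow> Inl -` S \<subseteq> N"
proof (induction m arbitrary: S)
  case 0 then show ?case by simp
next
  case (Suc m)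
  then obtain S0 T where "S0 \<in> set_spmf (BLITS_iter N f k r eps m)"
    "T \<in> set_spmf (SIEVE N f k r eps (Suc m) S0)" "S = S0 \<union> T"
    by (auto simp: set_bind_spmf)
  then show ?case using Suc.IH sieve_support[OF finN] by blast
qed

lemma step_real:
  fixes A C h0 m s r :: real
  assumes "m > 0" "C > 0" "h0 \<ge> 0" "r \<ge> 1" "s * r \<le> m"
    and "m * A \<ge> (m - s) * C * h0"
  shows "A / C \<ge> (1 - 1 / r) * h0"
proof -
  have "m - s \<ge> m * (1 - 1/r)"
  proof -
    have "s \<le> m / r" using assms by (simp add: field_simps)
    then show ?thesis by (simp add: algebra_simps)
  qed
  then have "(m - s) * (C * h0) \<ge> m * (1 - 1/r) * (C * h0)"
    using assms by (intro mult_right_mono) auto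
  then have "m * A \<ge> m * ((1 - 1/r) * h0 * C)" using assms(6) by (simp add: algebra_simps)
  then have "A \<ge> (1 - 1/r) * h0 * C" using assms(1) by simp
  then show ?thesis using assms(2) by (simp add: field_simps)
qed

lemma sieve_step:
  assumes finN: "finite N" and nn: "nonneg_on N f" and sm: "submodular_on N f"
    and r: "r \<ge> 1" and Opt: "Opt \<subseteq> N" and SN: "Inl -` S \<subseteq> N"
    and ll: "lossless_spmf (SIEVE N f k r eps i S)"
  shows "(\<integral>\<^sup>+T. ennreal (f (Opt \<union> Inl -` (S \<union> T))) \<partial>measure_spmf (SIEVE N f k r eps i S))
         \<ge> ennreal (1 - 1 / real r) * ennreal (f (Opt \<union> Inl -` S))"
proof (cases "sieve_loop N f k r eps i S")
  case None
  then show ?thesis using ll by (simp add: SIEVE_def)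
next
  case (Some X)
  obtain X' where X': "SIEVE N f k r eps i S = sieve_return f k r S X'" "finite X'" "k \<le> card X'"
    "Inl -` X' \<subseteq> N" using sieve_shape[OF finN Some] by blast
  define s where "s = k div r"
  define P where "P = {R. R \<subseteq> X' \<and> card R = s}"
  define Pl where "Pl = Xplus f k r S X'"
  define h where "h R = f (Opt \<union> Inl -` S \<union> Inl -` (R \<inter> Pl))" for R
  note uf0 = unif_facts[OF X'(2,3), of r, folded s_def]
  have Pfin: "finite P" and Pne: "P \<noteq> {}" using uf0(1,2) unfolding P_def by auto
  have hnn: "\<forall>A. A \<subseteq> X' \<longrightarrow> 0 \<le> h A"
  proof (intro allI impI)
    fix A assume "A \<subseteq> X'"
    then have "Opt \<union> Inl -` S \<union> Inl -` (A \<inter> Pl) \<subseteq> N" using Opt SN X'(4) by blast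
    then show "0 \<le> h A" using nn unfolding nonneg_on_def h_def by simp
  qed
  have hsub: "\<forall>A B. A \<subseteq> X' \<longrightarrow> B \<subseteq> X' \<longrightarrow> h (A \<union> B) + h (A \<inter> B) \<le> h A + h B"
  proof (intro allI impI)
    fix A B assume AB: "A \<subseteq> X'" "B \<subseteq> X'"
    define C where "C = Opt \<union> Inl -` S"
    define a where "a = Inl -` (A \<inter> Pl)"
    define b where "b = Inl -` (B \<inter> Pl)"
    have "C \<union> a \<subseteq> N" "C \<union> b \<subseteq> N" using Opt SN X'(4) AB unfolding C_def a_def b_def by blast+
    then have "f ((C \<union> a) \<union> (C \<union> b)) + f ((C \<union> a) \<inter> (C \<union> b)) \<le> f (C \<union> a) + f (C \<union> b)"
      using sm[unfolded submodular_on_def, rule_format, of "C \<union> a" "C \<union> b"] by simp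
    moreover have "h (A \<union> B) = f ((C \<union> a) \<union> (C \<union> b))"
      unfolding h_def C_def a_def b_def by (rule arg_cong[where f = f]) auto
    moreover have "h (A \<inter> B) = f ((C \<union> a) \<inter> (C \<union> b))"
      unfolding h_def C_def a_def b_def by (rule arg_cong[where f = f]) auto
    moreover have "h A = f (C \<union> a)" "h B = f (C \<union> b)"
      unfolding h_def C_def a_def b_def by (simp_all add: Un_assoc)
    ultimately show "h (A \<union> B) + h (A \<inter> B) \<le> h A + h B" by simp
  qed
  have h0: "h {} = f (Opt \<union> Inl -` S)" by (simp add: h_def)
  have cP: "card P = card X' choose s" unfolding P_def by (rule n_subsets[OF X'(2)])
  have cPpos: "card P > 0" using Pfin Pne by (simp add: card_gt_0_iff)
  have "(\<integral>\<^sup>+T. ennreal (f (Opt \<union> Inl -` (S \<union> T))) \<partial>measure_spmf (SIEVE N f k r eps i S))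
      = (\<integral>\<^sup>+R. ennreal (h R) \<partial>measure_pmf (pmf_of_set P))"
    by (simp add: X'(1) sieve_return_def Unif_def h_def Pl_def P_def s_def Un_assoc)
  also have "\<dots> = (\<Sum>R\<in>P. ennreal (h R)) / card P"
    using Pne Pfin by (rule nn_integral_pmf_of_set)
  also have "\<dots> = ennreal (sum h P / card P)"
  proof -
    have s1: "(\<Sum>R\<in>P. ennreal (h R)) = ennreal (sum h P)"
      by (rule sum_ennreal) (use hnn in \<open>auto simp: P_def\<close>)
    have s2: "sum h P \<ge> 0" by (rule sum_nonneg) (use hnn in \<open>auto simp: P_def\<close>)
    have s3: "(of_nat (card P) :: ennreal) = ennreal (real (card P))"
      by (rule ennreal_of_nat_eq_real_of_nat)
    show ?thesis unfolding s1 s3 using s2 cPpos by (simp add: divide_ennreal)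
  qed
  finally have eq: "(\<integral>\<^sup>+T. ennreal (f (Opt \<union> Inl -` (S \<union> T))) \<partial>measure_spmf (SIEVE N f k r eps i S))
      = ennreal (sum h P / card P)" .
  have hP0: "h {} \<ge> 0" using hnn by auto
  have ineq: "sum h P / card P \<ge> (1 - 1 / real r) * h {}"
  proof (cases "card X' = 0")
    case True
    then have "X' = {}" using X'(2) by simp
    then have "P = {{}}" using True X'(3) by (auto simp: P_def s_def)
    moreover have "(1 - 1 / real r) * h {} \<le> 1 * h {}"
      by (rule mult_right_mono) (use hP0 in auto)
    ultimately show ?thesis by simp
  next
    case False
    have ub: "real (card X') * sum h P \<ge> (real (card X') - real s) * real (card X' choose s) * h {}"
      unfolding P_def
    proof (rule unif_bound[OF X'(2) hnn hsub])
      show "s \<le> card X'" using X'(3) div_le_dividend[of k r] unfolding s_def by linarith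
    qed
    have "s * r \<le> k" unfolding s_def by (metis div_mult_mod_eq le_add1)
    then have "s * r \<le> card X'" using X'(3) by linarith
    then have sr: "real s * real r \<le> real (card X')"
      by (metis of_nat_le_iff of_nat_mult)
    have m0: "real (card X') > 0" using False by simp
    have C0: "real (card P) > 0" using cPpos by simp
    have r1: "real r \<ge> 1" using r by simp
    have ub': "real (card X') * sum h P \<ge> (real (card X') - real s) * real (card P) * h {}"
      using ub by (simp only: cP)
    show ?thesis
      by (rule step_real[OF m0 C0 hP0 r1 sr ub'])
  qed
  have "ennreal (1 - 1 / real r) * ennreal (f (Opt \<union> Inl -` S)) = ennreal ((1 - 1 / real r) * h {})"
    using hP0 r by (simp add: h0 ennreal_mult)
  also have "\<dots> \<le> ennreal (sum h P / card P)" using ineq by (rule ennreal_leI)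
  finally show ?thesis using eq by simp
qed

lemma blits_main:
  assumes finN: "finite N" and nn: "nonneg_on N f" and sm: "submodular_on N f"
    and r: "r \<ge> 1" and Opt: "Opt \<subseteq> N"
  shows "lossless_spmf (BLITS_iter N f k r eps m) \<Longrightarrow>
    (\<integral>\<^sup>+S. ennreal (f (Opt \<union> Inl -` S)) \<partial>measure_spmf (BLITS_iter N f k r eps m))
      \<ge> ennreal ((1 - 1 / real r) ^ m) * ennreal (f Opt)"
proof (induction m)
  case 0
  then show ?case by (simp add: measure_spmf_return_spmf nn_integral_return)
next
  case (Suc m)
  let ?B = "BLITS_iter N f k r eps m"
  let ?c = "1 - 1 / real r"
  have c0: "?c \<ge> 0" using r by simp
  have llB: "lossless_spmf ?B" and llS: "\<And>S. S \<in> set_spmf ?B \<Longrightarrow> lossless_spmf (SIEVE N f k r eps (Suc m) S)"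
    using Suc.prems by auto
  have "(\<integral>\<^sup>+S. ennreal (f (Opt \<union> Inl -` S)) \<partial>measure_spmf (BLITS_iter N f k r eps (Suc m)))
     = (\<integral>\<^sup>+S. (\<integral>\<^sup>+T. ennreal (f (Opt \<union> Inl -` T)) \<partial>measure_spmf (map_spmf (\<lambda>T. S \<union> T) (SIEVE N f k r eps (Suc m) S))) \<partial>measure_spmf ?B)"
    unfolding BLITS_iter.simps measure_spmf_bind
    by (subst nn_integral_bind[where B = "count_space UNIV"])
       (auto simp: o_def space_subprob_algebra measure_spmf.subprob_space_axioms)
  also have "\<dots> = (\<integral>\<^sup>+S. (\<integral>\<^sup>+T. ennreal (f (Opt \<union> Inl -` (S \<union> T))) \<partial>measure_spmf (SIEVE N f k r eps (Suc m) S)) \<partial>measure_spmf ?B)"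
    by (simp add: o_def)
  also have "\<dots> \<ge> (\<integral>\<^sup>+S. ennreal ?c * ennreal (f (Opt \<union> Inl -` S)) \<partial>measure_spmf ?B)"
  proof (rule nn_integral_mono_AE)
    show "AE S in measure_spmf ?B. ennreal ?c * ennreal (f (Opt \<union> Inl -` S))
       \<le> (\<integral>\<^sup>+T. ennreal (f (Opt \<union> Inl -` (S \<union> T))) \<partial>measure_spmf (SIEVE N f k r eps (Suc m) S))"
      unfolding AE_measure_spmf_iff
      using sieve_step[OF finN nn sm r Opt blits_support[OF finN] llS] by blast
  qed
  finally have 1: "(\<integral>\<^sup>+S. ennreal (f (Opt \<union> Inl -` S)) \<partial>measure_spmf (BLITS_iter N f k r eps (Suc m)))
     \<ge> ennreal ?c * (\<integral>\<^sup>+S. ennreal (f (Opt \<union> Inl -` S)) \<partial>measure_spmf ?B)"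
    by (simp add: nn_integral_cmult)
  have "ennreal (?c ^ Suc m) * ennreal (f Opt) = ennreal ?c * (ennreal (?c ^ m) * ennreal (f Opt))"
    using c0 by (simp add: ennreal_mult mult.assoc)
  also have "\<dots> \<le> ennreal ?c * (\<integral>\<^sup>+S. ennreal (f (Opt \<union> Inl -` S)) \<partial>measure_spmf ?B)"
    using Suc.IH[OF llB] by (rule mult_left_mono) simp
  finally show ?case using 1 by simp
qed

theorem lemma4:
  fixes N :: "'a set" and f :: "'a set \<Rightarrow> real" and k r i :: nat and eps :: real
    and Opt :: "'a set"
  assumes "finite N"
    and "nonneg_on N f" and "submodular_on N f"
    and "eps > 0" and "r \<ge> 1"
    and "1 \<le> i" and "i \<le> r + 1"
    and "Opt \<subseteq> N" and "card Opt \<le> k" and "f Opt = OPT N f k"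
    and "lossless_spmf (BLITS_iter N f k r eps (i - 1))"
  shows "integral\<^sup>L (measure_spmf (BLITS_iter N f k r eps (i - 1)))
           (\<lambda>S. f (Opt \<union> Inl -` S))
         \<ge> (1 - 1 / real r) ^ (i - 1) * OPT N f k"
proof -
  let ?M = "measure_spmf (BLITS_iter N f k r eps (i - 1))"
  let ?g = "\<lambda>S. f (Opt \<union> Inl -` S)"
  let ?c = "(1 - 1 / real r) ^ (i - 1)"
  have sub: "\<And>S. S \<in> set_spmf (BLITS_iter N f k r eps (i - 1)) \<Longrightarrow> Opt \<union> Inl -` S \<subseteq> N"
    using blits_support[OF assms(1)] assms(8) by blast
  have "\<forall>S\<in>set_spmf (BLITS_iter N f k r eps (i - 1)). 0 \<le> ?g S"
    using sub assms(2) unfolding nonneg_on_def by blast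
  then have nng: "AE S in ?M. 0 \<le> ?g S" by simp
  have I: "integral\<^sup>L ?M ?g = enn2real (\<integral>\<^sup>+S. ennreal (?g S) \<partial>?M)"
    by (rule integral_eq_nn_integral[OF _ nng]) simp
  define Bd where "Bd = Max (f ` Pow N)"
  have bd: "\<And>Y. Y \<subseteq> N \<Longrightarrow> f Y \<le> Bd"
    unfolding Bd_def using assms(1) by (intro Max_ge) auto
  have "(\<integral>\<^sup>+S. ennreal (?g S) \<partial>?M) \<le> (\<integral>\<^sup>+S. ennreal Bd \<partial>?M)"
    by (rule nn_integral_mono_AE) (use sub bd in \<open>auto intro: ennreal_leI\<close>)
  also have "\<dots> = ennreal Bd * emeasure ?M (space ?M)" by simp
  also have "\<dots> < top"
  proof -
    have "emeasure ?M (space ?M) \<noteq> top" by (rule measure_spmf.emeasure_finite)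
    then show ?thesis by (simp add: ennreal_mult_eq_top_iff less_top[symmetric])
  qed
  finally have fin: "(\<integral>\<^sup>+S. ennreal (?g S) \<partial>?M) < top" .
  have c0: "?c \<ge> 0" using assms(5) by simp
  have fO: "f Opt \<ge> 0" using assms(2,8) unfolding nonneg_on_def by blast
  have low: "ennreal (?c * f Opt) \<le> (\<integral>\<^sup>+S. ennreal (?g S) \<partial>?M)"
    using blits_main[OF assms(1,2,3,5,8) assms(11)] c0 fO by (simp add: ennreal_mult)
  have "?c * f Opt = enn2real (ennreal (?c * f Opt))" using c0 fO by simp
  also have "\<dots> \<le> enn2real (\<integral>\<^sup>+S. ennreal (?g S) \<partial>?M)"
    using low fin by (rule enn2real_mono)
  finally show ?thesis using I assms(10) by simp
qed

end
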